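(* Let $T\ge1$, $n\ge2$, $d\ge1$, $\tau\in\{1,\dots,T\}$, $\boldsymbol\mu\in\mathbb{R}^d$, $\boldsymbol\Sigma=\mathrm{diag}(\sigma_1^2,\dots,\sigma_d^2)$ with all $\sigma_j>0$, and $\mathbf{z}^*\in\mathbb{R}^d$. Under $\mathbf{H_0}$ the points $\mathbf{X}_{t,k}\in\mathbb{R}^d$ ($t\le T$, $k\le n$) are i.i.d. $\mathcal{N}(\boldsymbol\mu,\boldsymbol\Sigma)$. Let $\mathbf{N_\tau}=\frac1n\sum_{k=1}^n\mathbf{X}_{\tau,k}-\boldsymbol\mu$, $m^*=(\mathbf{z}^*-\boldsymbol\mu)^\top\boldsymbol\Sigma^{-1}(\mathbf{z}^*-\boldsymbol\mu)$ and \[ \log\mathrm{LR}_\tau=-\frac d2\log\Big(\frac{n-1}{n}\Big)-\frac{n}{2(n-1)}\mathbf{N_\tau}^\top\boldsymbol\Sigma^{-1}\mathbf{N_\tau}+\frac{n}{n-1}\mathbf{N_\tau}^\top\boldsymbol\Sigma^{-1}(\mathbf{z}^*-\boldsymbol\mu)-\frac{m^*}{2(n-1)}. \] Let $\alpha(\gamma)=\mathbb{P}_{\mathbf{H_0}}(\log\mathrm{LR}_\tau\ge\gamma)$, $\gamma_{\max}=\frac12\big[m^*-d\log\big(\frac{n-1}{n}\big)\big]$ and $R^2(\gamma)=\frac{2(n-1)}{n}\big[\frac{m^*}{2}-\gamma-\frac d2\log\big(\frac{n-1}{n}\big)\big]$. Then for every $\gamma\le\gamma_{\max}$, \[ \alpha(\gamma)=F_{\chi^2_d(nm^*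 )}\big(n\,R^2(\gamma)\big), \] where $F_{\chi^2_d(\lambda)}$ is the cumulative distribution function of the non-central chi-squared distribution with $d$ degrees of freedom and non-centrality parameter $\lambda$.
   Context: $\log\mathrm{LR}_\tau$ is the log likelihood ratio for testing whether the target $\mathbf{z}^*$ was inserted in batch $\tau$; $\alpha(\gamma)$ is the Type I error of the test rejecting when $\log\mathrm{LR}_\tau\ge\gamma$. *)

theory Defs
  imports "HOL-Probability.Probability"
begin

definition chi2_density :: "nat \<Rightarrow> real \<Rightarrow> real" where
  "chi2_density k x =
     (if x > 0 then x powr (real k / 2 - 1) * exp (- x / 2) / (2 powr (real k / 2) * Gamma (real k / 2))
      else 0)"

definition nc_chi2_density :: "nat \<Rightarrow> real \<Rightarrow> real \<Rightarrow> real" where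
  "nc_chi2_density k lam x =
     (\<Sum>i. exp (- lam / 2) * (lam / 2) ^ i / fact i * chi2_density (k + 2 * i) x)"

definition nc_chi2_cdf :: "nat \<Rightarrow> real \<Rightarrow> real \<Rightarrow> real" where
  "nc_chi2_cdf k lam x = (\<integral>y. indicator {..x} y * nc_chi2_density k lam y \<partial>lborel)"

text \<open>Log likelihood ratio for batch tau. Vectors in R^d are functions on indices 1..d;
  Sigma = diag(sigma_1^2, ..., sigma_d^2).\<close>
definition logLR :: "nat \<Rightarrow> nat \<Rightarrow> (nat \<Rightarrow> real) \<Rightarrow> (nat \<Rightarrow> real) \<Rightarrow> (nat \<Rightarrow> real)
     \<Rightarrow> (nat \<Rightarrow> nat \<Rightarrow> nat \<Rightarrow> real) \<Rightarrow> nat \<Rightarrow> real" where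
  "logLR n d mu sd zs x tau =
     (let N = (\<lambda>j. (\<Sum>k=1..n. x tau k j) / real n - mu j);
          m = (\<Sum>j=1..d. (zs j - mu j)^2 / (sd j)^2)
      in - real d / 2 * ln ((real n - 1) / real n)
         - real n / (2 * (real n - 1)) * (\<Sum>j=1..d. (N j)^2 / (sd j)^2)
         + real n / (real n - 1) * (\<Sum>j=1..d. N j * (zs j - mu j) / (sd j)^2)
         - m / (2 * (real n - 1)))"

definition mstar :: "nat \<Rightarrow> (nat \<Rightarrow> real) \<Rightarrow> (nat \<Rightarrow> real) \<Rightarrow> (nat \<Rightarrow> real) \<Rightarrow> real" where
  "mstar d mu sd zs = (\<Sum>j=1..d. (zs j - mu j)^2 / (sd j)^2)"

definition gamma_max :: "nat \<Rightarrow> nat \<Rightarrow> real \<Rightarrow> real" where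
  "gamma_max n d m = (m - real d * ln ((real n - 1) / real n)) / 2"

definition Rsq :: "nat \<Rightarrow> nat \<Rightarrow> real \<Rightarrow> real \<Rightarrow> real" where
  "Rsq n d m \<gamma> = 2 * (real n - 1) / real n * (m / 2 - \<gamma> - real d / 2 * ln ((real n - 1) / real n))"

end

theory Submission
  imports Defs
begin


definition gd :: "real \<Rightarrow> real \<Rightarrow> real" where
  "gd a x = (if x > 0 then x powr (a - 1) * exp (- x / 2) / (2 powr a * Gamma a) else 0)"

lemma chi2_gd: "chi2_density k x = gd (real k / 2) x"
  by (simp add: chi2_density_def gd_def)

lemma gd_nonneg: "a > 0 \<Longrightarrow> 0 \<le> gd a x"
  by (auto simp: gd_def intro!: divide_nonneg_pos mult_pos_pos)

lemma gd_measurable[measurable]: "gd a \<in> borel_measurable borel"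
  unfolding gd_def by measurable

lemma beta_nn:
  assumes "a > 0" "b > 0"
  shows "(\<integral>\<^sup>+t. ennreal (indicator {0<..<1} t * (t powr (b - 1) * (1 - t) powr (a - 1))) \<partial>lborel)
     = ennreal (Beta b a)"
proof -
  have "((\<lambda>t. t powr (b - 1) * (1 - t) powr (a - 1)) has_integral Beta b a) {0<..<1}"
    using has_integral_Beta_real[of b a] assms by (simp add: has_integral_Icc_iff_Ioo)
  from nn_integral_has_integral_lebesgue[OF _ this] show ?thesis
    by simp
qed

lemma rearr_aux:
  fixes A B C D E1 E2 P Q G1 G2 :: real
  shows "(A * B) * E1 / (P * G1) * ((C * D) * E2 / (Q * G2)) = (A * C) * (E1 * E2) / ((P * Q) * G1 * G2) * (D * B)"
  by (simp add: divide_inverse inverse_mult_distrib mult_ac)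

lemma rearr_aux2:
  fixes z P E T Ga Gb Gab :: real
  assumes "Ga \<noteq> 0" "Gb \<noteq> 0"
  shows "z * (P * E / (T * Ga * Gb)) * (Gb * Ga / Gab) = (z * P) * E / (T * Gab)"
  using assms by (simp add: field_simps)

lemma conv_gd:
  assumes a: "a > 0" and b: "b > 0"
  shows "(\<integral>\<^sup>+y. ennreal (gd a (z - y)) * ennreal (gd b y) \<partial>lborel) = ennreal (gd (a + b) z)"
proof (cases "z > 0")
  case False
  then have *: "\<And>y. ennreal (gd a (z - y)) * ennreal (gd b y) = 0"
    by (auto simp: gd_def)
  have "(\<integral>\<^sup>+y. ennreal (gd a (z - y)) * ennreal (gd b y) \<partial>lborel) = 0"
    by (simp only: * nn_integral_0_iff) simp
  then show ?thesis using False by (simp add: gd_def[of "a+b"])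
next
  case True
  define C where "C = z powr (a + b - 2) * exp (- z / 2) / (2 powr (a + b) * Gamma a * Gamma b)"
  have Bnn: "Beta b a \<ge> 0"
    using a b by (simp add: Beta_def Gamma_real_pos less_imp_le)
  have Cnn: "C \<ge> 0" unfolding C_def using a b True
    by (auto intro!: divide_nonneg_pos mult_pos_pos Gamma_real_pos)
  have pt: "ennreal (gd a (z - z * t)) * ennreal (gd b (z * t))
      = ennreal C * ennreal (indicator {0<..<1} t * (t powr (b - 1) * (1 - t) powr (a - 1)))" for t
  proof (cases "0 < t \<and> t < 1")
    case True
    have e1: "(z - z * t) = z * (1 - t)" by (simp add: algebra_simps)
    have p1: "(z * (1 - t)) powr (a - 1) = z powr (a - 1) * (1 - t) powr (a - 1)"
      using True \<open>z > 0\<close> by (simp add: powr_mult)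
    have p2: "(z * t) powr (b - 1) = z powr (b - 1) * t powr (b - 1)"
      using True \<open>z > 0\<close> by (simp add: powr_mult)
    have p3: "z powr (a - 1) * z powr (b - 1) = z powr (a + b - 2)"
      by (simp add: powr_add[symmetric])
    have p4: "exp (- (z * (1 - t)) / 2) * exp (- (z * t) / 2) = exp (- z / 2)"
    proof -
      have "z * (1 - t) + z * t = z" by (simp add: algebra_simps)
      then have "- (z * (1 - t)) / 2 + - (z * t) / 2 = - z / 2" by linarith
      then show ?thesis by (simp only: exp_add[symmetric])
    qed
    have p5: "2 powr a * 2 powr b = (2::real) powr (a + b)"
      by (simp add: powr_add)
    have "gd a (z - z * t) * gd b (z * t) =
      (z powr (a - 1) * (1 - t) powr (a - 1)) * exp (- (z * (1 - t)) / 2) / (2 powr a * Gamma a) *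
      ((z powr (b - 1) * t powr (b - 1)) * exp (- (z * t) / 2) / (2 powr b * Gamma b))"
    proof -
      have pos1: "z * (1 - t) > 0" and pos2: "z * t > 0" using True \<open>z > 0\<close> by auto
      show ?thesis by (simp only: e1 gd_def pos1 pos2 if_True p1 p2)
    qed
    also have "\<dots> = (z powr (a - 1) * z powr (b - 1)) * (exp (- (z * (1 - t)) / 2) * exp (- (z * t) / 2))
       / ((2 powr a * 2 powr b) * Gamma a * Gamma b) * (t powr (b - 1) * (1 - t) powr (a - 1))"
      by (rule rearr_aux)
    also have "\<dots> = C * (t powr (b - 1) * (1 - t) powr (a - 1))"
      by (simp only: p3 p4 p5 C_def mult.assoc)
    finally show ?thesis using True Cnn gd_nonneg[OF a] gd_nonneg[OF b]
      by (simp add: ennreal_mult[symmetric] indicator_def)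
  next
    case False
    then have "gd a (z - z * t) = 0 \<or> gd b (z * t) = 0"
      using \<open>z > 0\<close> by (auto simp: gd_def not_less zero_less_mult_iff)
    then show ?thesis using False by (auto simp: indicator_def)
  qed
  have "(\<integral>\<^sup>+y. ennreal (gd a (z - y)) * ennreal (gd b y) \<partial>lborel)
     = ennreal z * (\<integral>\<^sup>+t. ennreal (gd a (z - (0 + z * t))) * ennreal (gd b (0 + z * t)) \<partial>lborel)"
    using True by (subst nn_integral_real_affine[where c=z and t=0]) auto
  also have "\<dots> = ennreal z * (\<integral>\<^sup>+t. ennreal C * ennreal (indicator {0<..<1} t * (t powr (b - 1) * (1 - t) powr (a - 1))) \<partial>lborel)"
    by (simp add: pt)
  also have "\<dots> = ennreal z * (ennreal C * ennreal (Beta b a))"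
    by (subst nn_integral_cmult) (auto simp: beta_nn[OF a b])
  also have "\<dots> = ennreal (z * C * Beta b a)"
    using True Cnn Bnn by (simp add: ennreal_mult[symmetric] mult.assoc mult_nonneg_nonneg)
  also have "z * C * Beta b a = gd (a + b) z"
    using True a b Gamma_real_pos[of a] Gamma_real_pos[of b] Gamma_real_pos[of "a+b"]
  proof -
    have q0: "z powr ((a + b - 2) + 1) = z powr (a + b - 2) * z powr 1" by (rule powr_add)
    have q2: "(a + b - 2) + 1 = a + b - 1" by simp
    have q1: "z * z powr (a + b - 2) = z powr (a + b - 1)"
      using q0 True unfolding q2 by (simp add: mult.commute)
    have "z * C * Beta b a = (z * z powr (a + b - 2)) * exp (- z / 2) / (2 powr (a + b) * Gamma (a + b))"
      unfolding C_def Beta_def add.commute[of b a]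
      by (rule rearr_aux2) (use Gamma_real_pos[OF a] Gamma_real_pos[OF b] in auto)
    also have "\<dots> = gd (a + b) z" using True a b by (simp add: q1 gd_def)
    finally show ?thesis .
  qed
  finally show ?thesis .
qed



lemma ennreal_double_sum:
  fixes F :: "nat \<Rightarrow> nat \<Rightarrow> ennreal"
  shows "(\<Sum>i. \<Sum>j. F i j) = (\<Sum>s. \<Sum>i\<le>s. F i (s - i))"
proof -
  define G where "G = (\<lambda>q::nat\<times>nat. if snd q \<le> fst q then F (snd q) (fst q - snd q) else 0)"
  define D where "D = {q::nat\<times>nat. snd q \<le> fst q}"
  have bij: "bij_betw (\<lambda>p::nat\<times>nat. (fst p + snd p, fst p)) UNIV D"
    unfolding D_def
    by (rule bij_betwI[where g="\<lambda>q. (snd q, fst q - snd q)"]) auto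
  have "(\<Sum>i. \<Sum>j. F i j) = (\<integral>\<^sup>+i. \<integral>\<^sup>+j. F i j \<partial>count_space UNIV \<partial>count_space UNIV)"
    by (simp add: nn_integral_count_space_nat)
  also have "\<dots> = (\<integral>\<^sup>+p. case_prod F p \<partial>count_space UNIV)"
    using nn_integral_fst_count_space[of "case_prod F"] by simp
  also have "\<dots> = (\<integral>\<^sup>+p. G (fst p + snd p, fst p) \<partial>count_space UNIV)"
    by (intro nn_integral_cong) (auto simp: G_def)
  also have "\<dots> = (\<integral>\<^sup>+q. G q \<partial>count_space D)"
    by (rule nn_integral_bij_count_space[OF bij])
  also have "\<dots> = (\<integral>\<^sup>+q. G q \<partial>count_space UNIV)"
    by (rule nn_integral_count_space_eq) (auto simp: D_def G_def)
  also have "\<dots> = (\<integral>\<^sup>+s. \<integral>\<^sup>+i. G (s, i) \<partial>count_space UNIV \<partial>count_space UNIV)"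
    using nn_integral_fst_count_space[of G] by simp
  also have "\<dots> = (\<Sum>s. \<Sum>i. G (s, i))"
    by (simp add: nn_integral_count_space_nat)
  also have "\<dots> = (\<Sum>s. \<Sum>i\<le>s. F i (s - i))"
  proof (rule suminf_cong)
    fix s
    have "(\<Sum>i. G (s, i)) = (\<Sum>i\<in>{..s}. G (s, i))"
      by (rule suminf_finite) (auto simp: G_def)
    then show "(\<Sum>i. G (s, i)) = (\<Sum>i\<le>s. F i (s - i))"
      by (simp add: G_def)
  qed
  finally show ?thesis .
qed

definition pw :: "real \<Rightarrow> nat \<Rightarrow> real" where
  "pw l i = exp (- l / 2) * (l / 2) ^ i / fact i"

lemma pw_nonneg: "l \<ge> 0 \<Longrightarrow> pw l i \<ge> 0"
  by (simp add: pw_def)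

lemma rearr6:
  fixes Fs E1 A Fi E2 B Fj :: real
  assumes "Fs \<noteq> 0"
  shows "(E1 * A / Fi) * (E2 * B / Fj) = (E1 * E2) / Fs * ((Fs / (Fi * Fj)) * A * B)"
  using assms by (simp add: divide_inverse inverse_mult_distrib mult_ac)

lemma pw_conv:
  "(\<Sum>i\<le>s. pw l1 i * pw l2 (s - i)) = pw (l1 + l2) s"
proof -
  have "(\<Sum>i\<le>s. pw l1 i * pw l2 (s - i)) =
     (\<Sum>i\<le>s. exp (- (l1 + l2) / 2) / fact s * (of_nat (s choose i) * (l1/2)^i * (l2/2)^(s-i)))"
  proof (rule sum.cong)
    fix i assume "i \<in> {..s}"
    then have "i \<le> s" by simp
    then have "real (s choose i) = fact s / (fact i * fact (s - i))"
      by (rule binomial_fact)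
    moreover have "exp (- l1 / 2) * exp (- l2 / 2) = exp (- (l1 + l2) / 2)"
      by (simp add: exp_add[symmetric] add_divide_distrib)
    moreover have "pw l1 i * pw l2 (s - i) = (exp (- l1 / 2) * exp (- l2 / 2)) / fact s *
       ((fact s / (fact i * fact (s - i))) * (l1/2)^i * (l2/2)^(s-i))"
      unfolding pw_def by (rule rearr6) simp
    ultimately show "pw l1 i * pw l2 (s - i) =
      exp (- (l1 + l2) / 2) / fact s * (of_nat (s choose i) * (l1/2)^i * (l2/2)^(s-i))"
      by simp
  qed simp
  also have "\<dots> = exp (- (l1 + l2) / 2) / fact s * (l1/2 + l2/2)^s"
    by (simp add: binomial_ring sum_distrib_left)
  also have "\<dots> = pw (l1 + l2) s"
    by (simp add: pw_def add_divide_distrib)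
  finally show ?thesis .
qed

lemma nc_def2: "nc_chi2_density k l x = (\<Sum>i. pw l i * chi2_density (k + 2 * i) x)"
  by (simp add: nc_chi2_density_def pw_def)

lemma rearr3:
  fixes P x E T a G :: real
  shows "(P * x) * E / ((T * 2) * (a * G)) = P * E / (T * G) * (x / (2 * a))"
  unfolding divide_inverse inverse_mult_distrib by (simp only: mult_ac)

lemma rearr4:
  fixes E Q c F n :: real
  shows "E * (c * Q) / (n * F) = E * Q / F * (c / n)"
  unfolding divide_inverse inverse_mult_distrib by (simp only: mult_ac)

lemma rearr5:
  fixes l x A B :: real
  shows "(l / 2 / A) * (x / B) = (l * x) / (2 * (A * B))"
  unfolding divide_inverse inverse_mult_distrib by (simp only: mult_ac)

lemma pos_not_nonpos_Int: "(a::real) > 0 \<Longrightarrow> a \<notin> \<int>\<^sub>\<le>\<^sub>0"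
  by (auto elim!: nonpos_Ints_cases)

lemma gd_succ:
  assumes "a > 0" "x > 0"
  shows "gd (a + 1) x = gd a x * (x / (2 * a))"
proof -
  have g1: "Gamma (a + 1) = a * Gamma a"
    by (rule Gamma_plus1) (rule pos_not_nonpos_Int[OF assms(1)])
  have p1: "x powr (a + 1 - 1) = x powr (a - 1) * x"
  proof -
    have q0: "x powr ((a - 1) + 1) = x powr (a - 1) * x powr 1" by (rule powr_add)
    have q2: "(a - 1) + 1 = a + 1 - 1" by simp
    show ?thesis using q0 assms unfolding q2 by simp
  qed
  have p2: "(2::real) powr (a + 1) = 2 powr a * 2"
    by (simp add: powr_add)
  have "gd (a + 1) x = x powr (a + 1 - 1) * exp (- x / 2) / (2 powr (a + 1) * Gamma (a + 1))"
    using assms(2) by (simp only: gd_def if_True)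
  also have "\<dots> = (x powr (a - 1) * x) * exp (- x / 2) / ((2 powr a * 2) * (a * Gamma a))"
    by (simp only: p1 p2 g1)
  also have "\<dots> = x powr (a - 1) * exp (- x / 2) / (2 powr a * Gamma a) * (x / (2 * a))"
    by (rule rearr3)
  also have "\<dots> = gd a x * (x / (2 * a))"
    using assms(2) by (simp only: gd_def if_True)
  finally show ?thesis .
qed

lemma summable_nc:
  assumes k: "k \<ge> 1" and l: "l \<ge> 0"
  shows "summable (\<lambda>i. pw l i * chi2_density (k + 2 * i) x)"
proof (cases "x > 0")
  case False
  then show ?thesis by (simp add: chi2_density_def)
next
  case True
  define N where "N = nat \<lceil>l * x\<rceil>"
  show ?thesis
  proof (rule summable_ratio_test[where c="1/2" and N=N])
    fix i assume "N \<le> i"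
    then have iN: "real i \<ge> l * x" unfolding N_def by linarith
    have a: "real k / 2 + real i > 0" using k by simp
    have ch: "chi2_density (k + 2 * Suc i) x = chi2_density (k + 2 * i) x * (x / (2 * (real k / 2 + real i)))"
    proof -
      have e1: "real (k + 2 * Suc i) / 2 = (real k / 2 + real i) + 1" by simp
      have e2: "real (k + 2 * i) / 2 = real k / 2 + real i" by simp
      show ?thesis by (simp only: chi2_gd e1 e2 gd_succ[OF a True])
    qed
    have pws: "pw l (Suc i) = pw l i * (l / 2 / (real i + 1))"
      unfolding pw_def power_Suc fact_Suc of_nat_Suc by (simp add: rearr4 add.commute)
    have f0: "pw l i * chi2_density (k + 2 * i) x \<ge> 0"
      using pw_nonneg[OF l] gd_nonneg[of "real (k + 2 * i) / 2" x] k
      by (simp add: chi2_gd)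
    have r: "(l / 2 / (real i + 1)) * (x / (2 * (real k / 2 + real i))) \<le> 1 / 2"
    proof -
      define P where "P = (real i + 1) * (2 * (real k / 2 + real i))"
      have "(real i + 1) * 1 \<le> P"
        unfolding P_def using k by (intro mult_left_mono) auto
      then have "l * x \<le> P" using iN by simp
      moreover have "P > 0" unfolding P_def using a by simp
      ultimately have "l * x / P \<le> 1"
        by (simp add: divide_le_eq)
      then have "l * x / (2 * P) \<le> 1 / 2" by simp
      then show ?thesis unfolding rearr5 P_def .
    qed
    have "pw l (Suc i) * chi2_density (k + 2 * Suc i) x =
       (pw l i * chi2_density (k + 2 * i) x) * ((l / 2 / (real i + 1)) * (x / (2 * (real k / 2 + real i))))"
      unfolding ch pws by (simp only: mult_ac)
    also have "\<dots> \<le> (pw l i * chi2_density (k + 2 * i) x) * (1/2)"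
      by (rule mult_left_mono[OF r f0])
    finally show "norm (pw l (Suc i) * chi2_density (k + 2 * Suc i) x) \<le> 1 / 2 * norm (pw l i * chi2_density (k + 2 * i) x)"
      using f0 pw_nonneg[OF l, of "Suc i"] gd_nonneg[of "real (k + 2 * Suc i) / 2" x] k
      by (simp add: chi2_gd)
  qed simp
qed

lemma chi2_nonneg: "k \<ge> 1 \<Longrightarrow> chi2_density k x \<ge> 0"
  by (simp add: chi2_gd gd_nonneg)

lemma nc_nonneg: "k \<ge> 1 \<Longrightarrow> l \<ge> 0 \<Longrightarrow> nc_chi2_density k l x \<ge> 0"
  unfolding nc_def2
  by (intro suminf_nonneg summable_nc) (auto intro!: mult_nonneg_nonneg pw_nonneg chi2_nonneg)

lemma ennreal_nc:
  assumes "k \<ge> 1" "l \<ge> 0"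
  shows "ennreal (nc_chi2_density k l x) = (\<Sum>i. ennreal (pw l i * chi2_density (k + 2 * i) x))"
  unfolding nc_def2
  by (rule suminf_ennreal2[symmetric]) (use assms in \<open>auto intro!: summable_nc mult_nonneg_nonneg pw_nonneg chi2_nonneg\<close>)

lemma nc_measurable[measurable]: "nc_chi2_density k l \<in> borel_measurable borel"
  unfolding nc_def2 chi2_gd by measurable



lemma ennreal_suminf_prod:
  fixes a b :: "nat \<Rightarrow> ennreal"
  shows "(\<Sum>i. a i) * (\<Sum>j. b j) = (\<Sum>i. \<Sum>j. a i * b j)"
proof -
  have "(\<Sum>i. a i) * (\<Sum>j. b j) = (\<Sum>i. a i * (\<Sum>j. b j))"
    by (rule ennreal_suminf_multc[symmetric])
  also have "\<dots> = (\<Sum>i. \<Sum>j. a i * b j)"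
    by (rule suminf_cong) (rule ennreal_suminf_cmult[symmetric])
  finally show ?thesis .
qed

lemma chi2_measurable[measurable]: "chi2_density k \<in> borel_measurable borel"
proof -
  have "chi2_density k = gd (real k / 2)" by (rule ext) (simp add: chi2_gd)
  then show ?thesis by simp
qed

lemma conv_nc:
  assumes k1: "k1 \<ge> 1" and k2: "k2 \<ge> 1" and l1: "l1 \<ge> 0" and l2: "l2 \<ge> 0"
  shows "(\<integral>\<^sup>+y. ennreal (nc_chi2_density k1 l1 (z - y)) * ennreal (nc_chi2_density k2 l2 y) \<partial>lborel)
     = ennreal (nc_chi2_density (k1 + k2) (l1 + l2) z)"
proof -
  define c where "c = (\<lambda>s. chi2_density (k1 + k2 + 2 * s) z)"
  have cnn: "c s \<ge> 0" for s unfolding c_def using k1 by (intro chi2_nonneg) simp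
  have inner: "(\<integral>\<^sup>+y. ennreal (pw l1 i * chi2_density (k1 + 2 * i) (z - y)) *
                   ennreal (pw l2 j * chi2_density (k2 + 2 * j) y) \<partial>lborel)
      = ennreal (pw l1 i * pw l2 j * c (i + j))" for i j
  proof -
    have a: "real (k1 + 2 * i) / 2 > 0" and b: "real (k2 + 2 * j) / 2 > 0" using k1 k2 by auto
    have ab: "real (k1 + 2 * i) / 2 + real (k2 + 2 * j) / 2 = real (k1 + k2 + 2 * (i + j)) / 2"
    proof -
      have "real (k1 + 2 * i) + real (k2 + 2 * j) = real (k1 + k2 + 2 * (i + j))" by simp
      then show ?thesis by (simp only: add_divide_distrib[symmetric])
    qed
    have "(\<integral>\<^sup>+y. ennreal (pw l1 i * chi2_density (k1 + 2 * i) (z - y)) *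
                   ennreal (pw l2 j * chi2_density (k2 + 2 * j) y) \<partial>lborel)
        = (\<integral>\<^sup>+y. (ennreal (pw l1 i) * ennreal (pw l2 j)) *
             (ennreal (gd (real (k1 + 2 * i) / 2) (z - y)) * ennreal (gd (real (k2 + 2 * j) / 2) y)) \<partial>lborel)"
    proof (intro nn_integral_cong)
      fix y
      show "ennreal (pw l1 i * chi2_density (k1 + 2 * i) (z - y)) *
                   ennreal (pw l2 j * chi2_density (k2 + 2 * j) y) = (ennreal (pw l1 i) * ennreal (pw l2 j)) *
             (ennreal (gd (real (k1 + 2 * i) / 2) (z - y)) * ennreal (gd (real (k2 + 2 * j) / 2) y))"
        unfolding chi2_gd ennreal_mult[OF pw_nonneg[OF l1] gd_nonneg[OF a]] ennreal_mult[OF pw_nonneg[OF l2] gd_nonneg[OF b]]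
        by (simp only: mult_ac)
    qed
    also have "\<dots> = (ennreal (pw l1 i) * ennreal (pw l2 j)) *
        (\<integral>\<^sup>+y. ennreal (gd (real (k1 + 2 * i) / 2) (z - y)) * ennreal (gd (real (k2 + 2 * j) / 2) y) \<partial>lborel)"
      by (rule nn_integral_cmult) simp
    also have "\<dots> = (ennreal (pw l1 i) * ennreal (pw l2 j)) * ennreal (c (i + j))"
      by (simp only: conv_gd[OF a b] ab c_def chi2_gd)
    also have "\<dots> = ennreal (pw l1 i * pw l2 j * c (i + j))"
      by (simp only: ennreal_mult[OF pw_nonneg[OF l1] pw_nonneg[OF l2]] ennreal_mult[OF mult_nonneg_nonneg[OF pw_nonneg[OF l1] pw_nonneg[OF l2]] cnn])
    finally show ?thesis .
  qed
  have "(\<integral>\<^sup>+y. ennreal (nc_chi2_density k1 l1 (z - y)) * ennreal (nc_chi2_density k2 l2 y) \<partial>lborel)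
      = (\<integral>\<^sup>+y. (\<Sum>i. \<Sum>j. ennreal (pw l1 i * chi2_density (k1 + 2 * i) (z - y)) *
                   ennreal (pw l2 j * chi2_density (k2 + 2 * j) y)) \<partial>lborel)"
    by (simp only: ennreal_nc[OF k1 l1] ennreal_nc[OF k2 l2] ennreal_suminf_prod)
  also have "\<dots> = (\<Sum>i. \<Sum>j. (\<integral>\<^sup>+y. ennreal (pw l1 i * chi2_density (k1 + 2 * i) (z - y)) *
                   ennreal (pw l2 j * chi2_density (k2 + 2 * j) y) \<partial>lborel))"
  proof -
    have "(\<integral>\<^sup>+y. (\<Sum>i. \<Sum>j. ennreal (pw l1 i * chi2_density (k1 + 2 * i) (z - y)) *
                   ennreal (pw l2 j * chi2_density (k2 + 2 * j) y)) \<partial>lborel) =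
       (\<Sum>i. (\<integral>\<^sup>+y. (\<Sum>j. ennreal (pw l1 i * chi2_density (k1 + 2 * i) (z - y)) *
                   ennreal (pw l2 j * chi2_density (k2 + 2 * j) y)) \<partial>lborel))"
      by (rule nn_integral_suminf) measurable
    also have "\<dots> = (\<Sum>i. \<Sum>j. (\<integral>\<^sup>+y. ennreal (pw l1 i * chi2_density (k1 + 2 * i) (z - y)) *
                   ennreal (pw l2 j * chi2_density (k2 + 2 * j) y) \<partial>lborel))"
      by (rule suminf_cong) (rule nn_integral_suminf, measurable)
    finally show ?thesis .
  qed
  also have "\<dots> = (\<Sum>i. \<Sum>j. ennreal (pw l1 i * pw l2 j * c (i + j)))"
    by (simp only: inner)
  also have "\<dots> = (\<Sum>s. \<Sum>i\<le>s. ennreal (pw l1 i * pw l2 (s - i) * c (i + (s - i))))"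
    by (rule ennreal_double_sum)
  also have "\<dots> = (\<Sum>s. ennreal (pw (l1 + l2) s * c s))"
  proof (rule suminf_cong)
    fix s
    have "(\<Sum>i\<le>s. ennreal (pw l1 i * pw l2 (s - i) * c (i + (s - i))))
        = (\<Sum>i\<le>s. ennreal (pw l1 i * pw l2 (s - i) * c s))"
      by (rule sum.cong) auto
    also have "\<dots> = ennreal (\<Sum>i\<le>s. pw l1 i * pw l2 (s - i) * c s)"
      by (rule sum_ennreal) (simp add: pw_nonneg l1 l2 cnn)
    also have "(\<Sum>i\<le>s. pw l1 i * pw l2 (s - i) * c s) = pw (l1 + l2) s * c s"
      by (simp add: sum_distrib_right[symmetric] pw_conv)
    finally show "(\<Sum>i\<le>s. ennreal (pw l1 i * pw l2 (s - i) * c (i + (s - i)))) = ennreal (pw (l1 + l2) s * c s)" .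
  qed
  also have "\<dots> = ennreal (nc_chi2_density (k1 + k2) (l1 + l2) z)"
    using ennreal_nc[of "k1 + k2" "l1 + l2" z] k1 l1 l2 by (simp add: c_def)
  finally show ?thesis .
qed



lemma rearr7:
  fixes r F S P G :: real
  assumes "P \<noteq> 0" "G \<noteq> 0" "r \<ge> 0"
  shows "(r + 1/2) * (F * S / (P * G)) = ((2 * r + 2) * (2 * r + 1) * F) * S / ((4 * P) * ((r + 1) * G))"
proof -
  have "r + 1 \<noteq> 0" using assms by simp
  have e: "G * (P * 4) + G * (P * (r * 4)) = (G * P * 4) * (r + 1)" by (simp add: algebra_simps)
  have "G * (P * 4) + G * (P * (r * 4)) \<noteq> 0" unfolding e using assms by simp
  then show ?thesis using assms by (simp add: field_simps)
qed

lemma Gamma_half_nat: "Gamma (real i + 1/2) = fact (2 * i) * sqrt pi / (4 ^ i * fact i)"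
proof (induction i)
  case 0
  then show ?case by (simp add: Gamma_one_half_real)
next
  case (Suc i)
  have pos: "real i + 1/2 > 0" by simp
  have "Gamma (real (Suc i) + 1/2) = Gamma ((real i + 1/2) + 1)" by (simp add: add_ac)
  also have "\<dots> = (real i + 1/2) * Gamma (real i + 1/2)"
    by (rule Gamma_plus1) (rule pos_not_nonpos_Int[OF pos])
  also have "\<dots> = (real i + 1/2) * (fact (2 * i) * sqrt pi / (4 ^ i * fact i))"
    by (simp only: Suc.IH)
  also have "\<dots> = fact (2 * Suc i) * sqrt pi / (4 ^ Suc i * fact (Suc i))"
  proof -
    have f2: "fact (2 * Suc i) = (2 * real i + 2) * (2 * real i + 1) * (fact (2 * i) :: real)"
    proof -
      have "2 * Suc i = Suc (Suc (2 * i))" by simp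
      then show ?thesis by (simp only: fact_Suc) (simp add: algebra_simps)
    qed
    have f1: "fact (Suc i) = (real i + 1) * (fact i :: real)"
      by (simp add: algebra_simps)
    show ?thesis unfolding f2 f1 power_Suc
      by (rule rearr7) auto
  qed
  finally show ?case .
qed

lemma rearr8:
  fixes E1 C P F X S E2 R F2 Q :: real
  assumes "P \<noteq> 0" "F \<noteq> 0" "S \<noteq> 0" "R \<noteq> 0" "F2 \<noteq> 0" "Q \<noteq> 0"
  shows "E1 * (C / P) / F * ((X / S) * E2 / ((P * R) * (F2 * Q / ((P * P) * F))))
     = (E1 * E2) / (S * (R * Q)) * ((C * X) / F2)"
  using assms by (simp add: field_simps)

lemma nc1_term:
  assumes x: "x > 0"
  shows "pw (c^2) i * chi2_density (1 + 2 * i) x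
     = exp (- (c^2 + x) / 2) / (sqrt x * sqrt (2 * pi)) * ((c * sqrt x) ^ (2 * i) / fact (2 * i))"
proof -
  have h1: "real (1 + 2 * i) / 2 = real i + 1/2" by simp
  have h2: "x powr (real i + 1/2 - 1) = x ^ i / sqrt x"
  proof -
    have "x powr (real i + 1/2 - 1) = x powr (real i - 1/2)" by simp
    also have "\<dots> = x powr real i / x powr (1/2)" by (rule powr_diff)
    also have "\<dots> = x ^ i / sqrt x" using x by (simp add: powr_realpow powr_half_sqrt)
    finally show ?thesis .
  qed
  have h3: "(2::real) powr (real i + 1/2) = 2 ^ i * sqrt 2"
    by (simp add: powr_add powr_realpow powr_half_sqrt)
  have h4: "(c * sqrt x) ^ (2 * i) = (c^2) ^ i * x ^ i"
    using x by (simp add: power_mult power_mult_distrib)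
  have h5: "(c^2 / 2) ^ i = (c^2) ^ i / 2 ^ i" by (simp add: power_divide)
  have h6: "(4::real) ^ i = 2 ^ i * 2 ^ i"
    by (simp add: power_mult_distrib[symmetric])
  have h7: "sqrt (2 * pi) = sqrt 2 * sqrt pi" by (simp add: real_sqrt_mult)
  have h8: "exp (- (c^2 + x) / 2) = exp (- (c^2) / 2) * exp (- x / 2)"
    by (simp add: exp_add[symmetric] add_divide_distrib)
  have "pw (c^2) i * chi2_density (1 + 2 * i) x =
     exp (- (c^2) / 2) * ((c^2) ^ i / 2 ^ i) / fact i *
       ((x ^ i / sqrt x) * exp (- x / 2) / ((2 ^ i * sqrt 2) * (fact (2 * i) * sqrt pi / ((2 ^ i * 2 ^ i) * fact i))))"
    unfolding pw_def chi2_density_def h1 h2 h3 Gamma_half_nat h5 h6 using x by simp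
  also have "\<dots> = (exp (- (c^2) / 2) * exp (- x / 2)) / (sqrt x * (sqrt 2 * sqrt pi)) * (((c^2) ^ i * x ^ i) / fact (2 * i))"
    by (rule rearr8) (use x in auto)
  also have "\<dots> = exp (- (c^2 + x) / 2) / (sqrt x * sqrt (2 * pi)) * ((c * sqrt x) ^ (2 * i) / fact (2 * i))"
    by (simp only: h4 h7 h8)
  finally show ?thesis .
qed

lemma cosh_sums_even:
  fixes y :: real
  shows "(\<lambda>i. y ^ (2 * i) / fact (2 * i)) sums cosh y"
proof -
  define f where "f = (\<lambda>n. if even n then y ^ n /\<^sub>R fact n else 0)"
  have "f sums cosh y" unfolding f_def by (rule cosh_converges)
  moreover have "strict_mono (\<lambda>i::nat. 2 * i)" by (rule strict_monoI) simp
  moreover have "\<And>n. n \<notin> range (\<lambda>i::nat. 2 * i) \<Longrightarrow> f n = 0"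
    unfolding f_def by (auto elim!: evenE)
  ultimately have "(\<lambda>i. f (2 * i)) sums cosh y"
    using sums_mono_reindex[of "\<lambda>i. 2 * i" f] by blast
  then show ?thesis by (simp add: f_def divide_inverse mult.commute)
qed

lemma nc1_pointwise:
  assumes x: "x > 0"
  shows "nc_chi2_density 1 (c^2) x = (normal_density c 1 (sqrt x) + normal_density c 1 (- sqrt x)) / (2 * sqrt x)"
proof -
  define K where "K = exp (- (c^2 + x) / 2) / (sqrt x * sqrt (2 * pi))"
  define a where "a = c * sqrt x"
  have "(\<lambda>i. K * (a ^ (2 * i) / fact (2 * i))) sums (K * cosh a)"
    by (rule sums_mult) (rule cosh_sums_even)
  then have "(\<lambda>i. pw (c^2) i * chi2_density (1 + 2 * i) x) sums (K * cosh a)"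
    by (simp only: nc1_term[OF x] K_def a_def)
  then have lhs: "nc_chi2_density 1 (c^2) x = K * cosh a"
    unfolding nc_def2 by (rule sums_unique[symmetric])
  have sx: "sqrt x ^ 2 = x" using x by simp
  have e1: "exp (- (sqrt x - c)\<^sup>2 / (2 * 1\<^sup>2)) = exp (- (c^2 + x) / 2) * exp a"
  proof -
    have "- (sqrt x - c)\<^sup>2 / (2 * 1\<^sup>2) = - (c^2 + x) / 2 + a"
      unfolding a_def by (simp add: power2_diff sx field_simps)
    then show ?thesis by (simp only: exp_add)
  qed
  have e2: "exp (- (- sqrt x - c)\<^sup>2 / (2 * 1\<^sup>2)) = exp (- (c^2 + x) / 2) * exp (- a)"
  proof -
    have "- (- sqrt x - c)\<^sup>2 / (2 * 1\<^sup>2) = - (c^2 + x) / 2 + - a"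
      unfolding a_def by (simp add: power2_diff power2_sum sx field_simps)
    then show ?thesis by (simp only: exp_add)
  qed
  have "(normal_density c 1 (sqrt x) + normal_density c 1 (- sqrt x)) / (2 * sqrt x)
      = (1 / sqrt (2 * pi * 1\<^sup>2) * (exp (- (c^2 + x) / 2) * exp a) +
         1 / sqrt (2 * pi * 1\<^sup>2) * (exp (- (c^2 + x) / 2) * exp (- a))) / (2 * sqrt x)"
    unfolding normal_density_def e1 e2 ..
  also have "\<dots> = K * ((exp a + exp (- a)) / 2)"
    unfolding K_def by (simp add: field_simps)
  also have "\<dots> = K * cosh a" by (simp add: cosh_def)
  finally show ?thesis using lhs by simp
qed



lemma nc_nonpos: "x \<le> 0 \<Longrightarrow> nc_chi2_density k l x = 0"
  by (simp add: nc_def2 chi2_density_def)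

lemma halfline_SUP:
  fixes G :: "real \<Rightarrow> real" and r :: "nat \<Rightarrow> real"
  assumes [measurable]: "G \<in> borel_measurable borel" and nn: "\<And>x. G x \<ge> 0"
    and inc: "incseq r" and unb: "\<And>x. \<exists>m. x \<le> r m"
  shows "(\<integral>\<^sup>+x. ennreal (G x * indicator {0..} x) \<partial>lborel)
       = (SUP m. \<integral>\<^sup>+x. ennreal (G x * indicator {0..r m} x) \<partial>lborel)"
proof -
  have incf: "incseq (\<lambda>m x. ennreal (G x * indicator {0..r m} x))"
  proof (rule incseq_SucI, rule le_funI)
    fix m x
    have "r m \<le> r (Suc m)" using inc by (simp add: incseq_Suc_iff)
    then show "ennreal (G x * indicator {0..r m} x) \<le> ennreal (G x * indicator {0..r (Suc m)} x)"
      using nn[of x] by (auto intro!: ennreal_leI split: split_indicator)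
  qed
  have pt: "(SUP m. ennreal (G x * indicator {0..r m} x)) = ennreal (G x * indicator {0..} x)" for x
  proof (cases "x \<ge> 0")
    case False
    then show ?thesis by (simp add: indicator_def)
  next
    case True
    obtain m0 where m0: "x \<le> r m0" using unb by blast
    show ?thesis
    proof (rule antisym)
      show "(SUP m. ennreal (G x * indicator {0..r m} x)) \<le> ennreal (G x * indicator {0..} x)"
        using True nn[of x] by (intro SUP_least) (auto intro!: ennreal_leI split: split_indicator)
      show "ennreal (G x * indicator {0..} x) \<le> (SUP m. ennreal (G x * indicator {0..r m} x))"
        using True m0 by (intro SUP_upper2[of m0]) (auto split: split_indicator)
    qed
  qed
  have "(SUP m. \<integral>\<^sup>+x. ennreal (G x * indicator {0..r m} x) \<partial>lborel)
      = (\<integral>\<^sup>+x. (SUP m. ennreal (G x * indicator {0..r m} x)) \<partial>lborel)"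
    by (rule nn_integral_monotone_convergence_SUP[OF incf, symmetric]) measurable
  then show ?thesis by (simp only: pt)
qed

lemma nn_integral_sq_subst:
  fixes F :: "real \<Rightarrow> real"
  assumes [measurable]: "F \<in> borel_measurable borel" and nn: "\<And>x. F x \<ge> 0"
  shows "(\<integral>\<^sup>+x. ennreal (F x * indicator {0..} x) \<partial>lborel)
       = (\<integral>\<^sup>+y. ennreal (F (y\<^sup>2) * (2 * y) * indicator {0..} y) \<partial>lborel)"
proof -
  have eq: "(\<integral>\<^sup>+x. ennreal (F x * indicator {0..(real m)\<^sup>2} x) \<partial>lborel)
      = (\<integral>\<^sup>+y. ennreal (F (y\<^sup>2) * (2 * y) * indicator {0..real m} y) \<partial>lborel)" for m
  proof -
    have "(\<integral>\<^sup>+x. ennreal (F x * indicator {0\<^sup>2..(real m)\<^sup>2} x) \<partial>lborel)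
      = (\<integral>\<^sup>+y. ennreal (F (y\<^sup>2) * (2 * y) * indicator {0..real m} y) \<partial>lborel)"
      by (rule nn_integral_substitution[where f=F and g="\<lambda>x. x^2" and a=0 and b="real m" and g'="\<lambda>x. 2 * x"])
         (auto simp: set_borel_measurable_def intro!: derivative_eq_intros continuous_intros)
    then show ?thesis by simp
  qed
  have G2: "(\<lambda>y. F (y\<^sup>2) * (2 * y) * indicator {0..} y) = (\<lambda>y. (F (y\<^sup>2) * (2 * y) * indicator {0..} y) * indicator {0..} y)"
    by (auto simp: indicator_def)
  have "(\<integral>\<^sup>+x. ennreal (F x * indicator {0..} x) \<partial>lborel)
      = (SUP m. \<integral>\<^sup>+x. ennreal (F x * indicator {0..(real m)\<^sup>2} x) \<partial>lborel)"
  proof (rule halfline_SUP)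
    show "incseq (\<lambda>m. (real m)\<^sup>2)" by (rule incseq_SucI) (simp add: power_mono)
    show "\<exists>m. x \<le> (real m)\<^sup>2" for x
    proof -
      obtain m where "x \<le> real m" using real_arch_simple by blast
      moreover have "real m \<le> (real m)\<^sup>2" by (cases m) (auto simp: power2_eq_square)
      ultimately show ?thesis by (intro exI[of _ m]) linarith
    qed
  qed (use nn in auto)
  also have "\<dots> = (SUP m. \<integral>\<^sup>+y. ennreal (F (y\<^sup>2) * (2 * y) * indicator {0..real m} y) \<partial>lborel)"
    by (simp only: eq)
  also have "\<dots> = (SUP m. \<integral>\<^sup>+y. ennreal ((F (y\<^sup>2) * (2 * y) * indicator {0..} y) * indicator {0..real m} y) \<partial>lborel)"
    by (intro SUP_cong refl nn_integral_cong) (auto simp: indicator_def)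
  also have "\<dots> = (\<integral>\<^sup>+y. ennreal ((F (y\<^sup>2) * (2 * y) * indicator {0..} y) * indicator {0..} y) \<partial>lborel)"
  proof (rule halfline_SUP[symmetric])
    show "incseq (\<lambda>m. real m)" by (rule incseq_SucI) simp
    show "\<exists>m. x \<le> real m" for x using real_arch_simple by blast
    show "0 \<le> F (x\<^sup>2) * (2 * x) * indicator {0..} x" for x using nn by (auto simp: indicator_def)
  qed measurable
  also have "\<dots> = (\<integral>\<^sup>+y. ennreal (F (y\<^sup>2) * (2 * y) * indicator {0..} y) \<partial>lborel)"
    by (intro nn_integral_cong) (auto simp: indicator_def)
  finally show ?thesis .
qed

lemma sq_key:
  fixes A :: "real set"
  assumes A[measurable]: "A \<in> sets borel"
  shows "(\<integral>\<^sup>+y. ennreal (normal_density c 1 y) * indicator A (y\<^sup>2) \<partial>lborel)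
       = (\<integral>\<^sup>+x. ennreal (nc_chi2_density 1 (c\<^sup>2) x) * indicator A x \<partial>lborel)"
proof -
  define \<phi> where "\<phi> = normal_density c 1"
  define f where "f = nc_chi2_density 1 (c\<^sup>2)"
  define F where "F = (\<lambda>x. f x * indicator A x)"
  have fnn: "f x \<ge> 0" for x unfolding f_def by (rule nc_nonneg) auto
  have Fnn: "F x \<ge> 0" for x unfolding F_def using fnn[of x] by (simp add: indicator_def)
  have [measurable]: "f \<in> borel_measurable borel" unfolding f_def by measurable
  have [measurable]: "F \<in> borel_measurable borel" unfolding F_def by measurable
  have [measurable]: "\<phi> \<in> borel_measurable borel" unfolding \<phi>_def by measurable
  have phinn: "\<phi> x \<ge> 0" for x unfolding \<phi>_def by simp
  have key: "F (y\<^sup>2) * (2 * y) = (\<phi> y + \<phi> (- y)) * indicator A (y\<^sup>2)" if "y > 0" for y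
  proof -
    have sy: "sqrt (y\<^sup>2) = y" using that by simp
    have "f (y\<^sup>2) = (\<phi> y + \<phi> (- y)) / (2 * y)"
      unfolding f_def \<phi>_def using nc1_pointwise[of "y\<^sup>2" c] that by (simp add: sy)
    then have h: "f (y\<^sup>2) * (2 * y) = \<phi> y + \<phi> (- y)" using that by (simp add: field_simps)
    have "F (y\<^sup>2) * (2 * y) = (f (y\<^sup>2) * (2 * y)) * indicator A (y\<^sup>2)"
      unfolding F_def by (simp only: mult_ac)
    then show ?thesis by (simp only: h)
  qed
  have "(\<integral>\<^sup>+x. ennreal (f x) * indicator A x \<partial>lborel) = (\<integral>\<^sup>+x. ennreal (F x * indicator {0..} x) \<partial>lborel)"
  proof (intro nn_integral_cong)
    fix x
    show "ennreal (f x) * indicator A x = ennreal (F x * indicator {0..} x)"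
    proof (cases "x \<ge> 0")
      case True then show ?thesis by (simp add: F_def indicator_def)
    next
      case False then show ?thesis by (simp add: F_def f_def nc_nonpos)
    qed
  qed
  also have "\<dots> = (\<integral>\<^sup>+y. ennreal (F (y\<^sup>2) * (2 * y) * indicator {0..} y) \<partial>lborel)"
    by (rule nn_integral_sq_subst) (auto intro: Fnn)
  also have "\<dots> = (\<integral>\<^sup>+y. ennreal ((\<phi> y + \<phi> (- y)) * indicator A (y\<^sup>2) * indicator {0<..} y) \<partial>lborel)"
  proof (rule nn_integral_cong_AE)
    show "AE y in lborel. ennreal (F (y\<^sup>2) * (2 * y) * indicator {0..} y)
        = ennreal ((\<phi> y + \<phi> (- y)) * indicator A (y\<^sup>2) * indicator {0<..} y)"
      using AE_lborel_singleton[of 0]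
    proof eventually_elim
      case (elim y)
      show ?case
      proof (cases "y > 0")
        case True then show ?thesis using key[OF True] by (simp add: indicator_def)
      next
        case False then show ?thesis using elim by (simp add: indicator_def)
      qed
    qed
  qed
  also have "\<dots> = (\<integral>\<^sup>+y. ennreal (\<phi> y) * indicator A (y\<^sup>2) * indicator {0<..} y
                     + ennreal (\<phi> (- y)) * indicator A (y\<^sup>2) * indicator {0<..} y \<partial>lborel)"
    by (intro nn_integral_cong) (simp add: distrib_right ennreal_plus phinn indicator_def)
  also have "\<dots> = (\<integral>\<^sup>+y. ennreal (\<phi> y) * indicator A (y\<^sup>2) * indicator {0<..} y \<partial>lborel)
                 + (\<integral>\<^sup>+y. ennreal (\<phi> (- y)) * indicator A (y\<^sup>2) * indicator {0<..} y \<partial>lborel)"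
    by (rule nn_integral_add) measurable
  also have "(\<integral>\<^sup>+y. ennreal (\<phi> (- y)) * indicator A (y\<^sup>2) * indicator {0<..} y \<partial>lborel)
      = (\<integral>\<^sup>+y. ennreal (\<phi> y) * indicator A (y\<^sup>2) * indicator {..<0} y \<partial>lborel)"
  proof -
    have "(\<integral>\<^sup>+y. ennreal (\<phi> y) * indicator A (y\<^sup>2) * indicator {..<0} y \<partial>lborel)
       = ennreal \<bar>- 1\<bar> * (\<integral>\<^sup>+y. ennreal (\<phi> (0 + - 1 * y)) * indicator A ((0 + - 1 * y)\<^sup>2) * indicator {..<0} (0 + - 1 * y) \<partial>lborel)"
      by (rule nn_integral_real_affine) auto
    also have "\<dots> = (\<integral>\<^sup>+y. ennreal (\<phi> (- y)) * indicator A (y\<^sup>2) * indicator {0<..} y \<partial>lborel)"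
      by (simp add: indicator_def)
    finally show ?thesis by simp
  qed
  also have "(\<integral>\<^sup>+y. ennreal (\<phi> y) * indicator A (y\<^sup>2) * indicator {0<..} y \<partial>lborel)
                 + (\<integral>\<^sup>+y. ennreal (\<phi> y) * indicator A (y\<^sup>2) * indicator {..<0} y \<partial>lborel)
      = (\<integral>\<^sup>+y. ennreal (\<phi> y) * indicator A (y\<^sup>2) * indicator {0<..} y
                 + ennreal (\<phi> y) * indicator A (y\<^sup>2) * indicator {..<0} y \<partial>lborel)"
    by (rule nn_integral_add[symmetric]) measurable
  also have "\<dots> = (\<integral>\<^sup>+y. ennreal (\<phi> y) * indicator A (y\<^sup>2) \<partial>lborel)"
  proof (rule nn_integral_cong_AE)
    show "AE y in lborel. ennreal (\<phi> y) * indicator A (y\<^sup>2) * indicator {0<..} y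
                 + ennreal (\<phi> y) * indicator A (y\<^sup>2) * indicator {..<0} y = ennreal (\<phi> y) * indicator A (y\<^sup>2)"
      using AE_lborel_singleton[of 0] by eventually_elim (auto simp: indicator_def)
  qed
  finally show ?thesis unfolding f_def \<phi>_def by simp
qed

lemma (in prob_space) sq_normal_distributed:
  assumes Y: "distributed M lborel Y (normal_density c 1)"
  shows "distributed M lborel (\<lambda>\<omega>. (Y \<omega>)\<^sup>2) (\<lambda>x. ennreal (nc_chi2_density 1 (c\<^sup>2) x))"
  unfolding distributed_def
proof (intro conjI)
  have Ym[measurable]: "Y \<in> measurable M borel"
    using distributed_measurable[OF Y] by simp
  show "(\<lambda>x. ennreal (nc_chi2_density 1 (c\<^sup>2) x)) \<in> borel_measurable lborel" by measurable
  show "(\<lambda>\<omega>. (Y \<omega>)\<^sup>2) \<in> measurable M lborel" by measurable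
  show "distr M lborel (\<lambda>\<omega>. (Y \<omega>)\<^sup>2) = density lborel (\<lambda>x. ennreal (nc_chi2_density 1 (c\<^sup>2) x))"
  proof (rule measure_eqI)
    show "sets (distr M lborel (\<lambda>\<omega>. (Y \<omega>)\<^sup>2)) = sets (density lborel (\<lambda>x. ennreal (nc_chi2_density 1 (c\<^sup>2) x)))"
      by simp
    fix A assume "A \<in> sets (distr M lborel (\<lambda>\<omega>. (Y \<omega>)\<^sup>2))"
    then have A[measurable]: "A \<in> sets borel" by simp
    have "emeasure (distr M lborel (\<lambda>\<omega>. (Y \<omega>)\<^sup>2)) A = emeasure M ((\<lambda>\<omega>. (Y \<omega>)\<^sup>2) -` A \<inter> space M)"
      by (rule emeasure_distr) auto
    also have "(\<lambda>\<omega>. (Y \<omega>)\<^sup>2) -` A \<inter> space M = Y -` {y. y\<^sup>2 \<in> A} \<inter> space M" by auto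
    also have "emeasure M (Y -` {y. y\<^sup>2 \<in> A} \<inter> space M)
        = (\<integral>\<^sup>+y. ennreal (normal_density c 1 y) * indicator {y. y\<^sup>2 \<in> A} y \<partial>lborel)"
      by (rule distributed_emeasure[OF Y]) measurable
    also have "\<dots> = (\<integral>\<^sup>+y. ennreal (normal_density c 1 y) * indicator A (y\<^sup>2) \<partial>lborel)"
      by (intro nn_integral_cong) (simp add: indicator_def)
    also have "\<dots> = (\<integral>\<^sup>+x. ennreal (nc_chi2_density 1 (c\<^sup>2) x) * indicator A x \<partial>lborel)"
      by (rule sq_key[OF A])
    also have "\<dots> = emeasure (density lborel (\<lambda>x. ennreal (nc_chi2_density 1 (c\<^sup>2) x))) A"
      by (rule emeasure_density[symmetric]) auto
    finally show "emeasure (distr M lborel (\<lambda>\<omega>. (Y \<omega>)\<^sup>2)) A = emeasure (density lborel (\<lambda>x. ennreal (nc_chi2_density 1 (c\<^sup>2) x))) A" .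
  qed
qed



lemma (in prob_space) sum_sq_normal:
  assumes "finite I" "I \<noteq> {}" "indep_vars (\<lambda>_. borel) Y I"
    "\<And>j. j \<in> I \<Longrightarrow> distributed M lborel (Y j) (normal_density (c j) 1)"
  shows "distributed M lborel (\<lambda>\<omega>. \<Sum>j\<in>I. (Y j \<omega>)\<^sup>2)
           (\<lambda>x. ennreal (nc_chi2_density (card I) (\<Sum>j\<in>I. (c j)\<^sup>2) x))"
  using assms
proof (induction I rule: finite_ne_induct)
  case (singleton i)
  then show ?case using sq_normal_distributed[of "Y i" "c i"] by simp
next
  case (insert i I)
  have ind2: "indep_vars (\<lambda>_. borel) (\<lambda>j \<omega>. (Y j \<omega>)\<^sup>2) (insert i I)"
    by (rule indep_vars_compose2[OF insert.prems(1)]) measurable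
  have iv: "indep_var borel (\<lambda>\<omega>. (Y i \<omega>)\<^sup>2) borel (\<lambda>\<omega>. \<Sum>j\<in>I. (Y j \<omega>)\<^sup>2)"
    using indep_vars_sum[OF insert.hyps(1) insert.hyps(3) ind2] by simp
  have IH: "distributed M lborel (\<lambda>\<omega>. \<Sum>j\<in>I. (Y j \<omega>)\<^sup>2)
           (\<lambda>x. ennreal (nc_chi2_density (card I) (\<Sum>j\<in>I. (c j)\<^sup>2) x))"
    by (rule insert.IH) (use insert.prems in \<open>auto intro: indep_vars_subset\<close>)
  have Di: "distributed M lborel (\<lambda>\<omega>. (Y i \<omega>)\<^sup>2) (\<lambda>x. ennreal (nc_chi2_density 1 ((c i)\<^sup>2) x))"
    by (rule sq_normal_distributed) (use insert.prems in auto)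
  have cI: "card I \<ge> 1" using insert.hyps(1,2) by (simp add: Suc_leI card_gt_0_iff)
  have "distributed M lborel (\<lambda>\<omega>. (Y i \<omega>)\<^sup>2 + (\<Sum>j\<in>I. (Y j \<omega>)\<^sup>2))
     (\<lambda>z. \<integral>\<^sup>+y. ennreal (nc_chi2_density 1 ((c i)\<^sup>2) (z - y)) *
                  ennreal (nc_chi2_density (card I) (\<Sum>j\<in>I. (c j)\<^sup>2) y) \<partial>lborel)"
    by (rule distributed_convolution[OF iv Di IH])
  also have "(\<lambda>z. \<integral>\<^sup>+y. ennreal (nc_chi2_density 1 ((c i)\<^sup>2) (z - y)) *
                  ennreal (nc_chi2_density (card I) (\<Sum>j\<in>I. (c j)\<^sup>2) y) \<partial>lborel)
      = (\<lambda>z. ennreal (nc_chi2_density (1 + card I) ((c i)\<^sup>2 + (\<Sum>j\<in>I. (c j)\<^sup>2)) z))"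
    by (rule ext, rule conv_nc) (use cI in \<open>auto intro: sum_nonneg\<close>)
  finally show ?case using insert.hyps by simp
qed



lemma llr_alg:
  fixes s d L A B m g :: real
  assumes s: "s > 0"
  shows "(g \<le> - d / 2 * L - (s + 1) / (2 * s) * A + (s + 1) / s * B - m / (2 * s))
     \<longleftrightarrow> (s + 1) * (A - 2 * B + m) \<le> (s + 1) * (2 * s / (s + 1) * (m / 2 - g - d / 2 * L))"
proof -
  have e1: "- d / 2 * L - (s + 1) / (2 * s) * A + (s + 1) / s * B - m / (2 * s)
      = (- d * s * L - (s + 1) * A + 2 * (s + 1) * B - m) / (2 * s)"
    using s by (simp add: field_simps)
  have e2: "(s + 1) * (2 * s / (s + 1) * (m / 2 - g - d / 2 * L)) = 2 * s * (m / 2 - g - d / 2 * L)"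
    using s by simp
  have "(g \<le> (- d * s * L - (s + 1) * A + 2 * (s + 1) * B - m) / (2 * s))
      \<longleftrightarrow> g * (2 * s) \<le> - d * s * L - (s + 1) * A + 2 * (s + 1) * B - m"
    using s by (simp add: le_divide_eq)
  also have "\<dots> \<longleftrightarrow> (s + 1) * (A - 2 * B + m) \<le> 2 * s * (m / 2 - g - d / 2 * L)"
    by (simp add: algebra_simps)
  finally show ?thesis unfolding e1 e2 .
qed

lemma logLR_equiv:
  fixes x :: "nat \<Rightarrow> nat \<Rightarrow> nat \<Rightarrow> real"
  assumes n: "n \<ge> 2" and sd: "\<And>j. j \<in> {1..d} \<Longrightarrow> sd j > 0"
  shows "\<gamma> \<le> logLR n d mu sd zs x tau \<longleftrightarrow>
    (\<Sum>j\<in>{1..d}. (((\<Sum>k\<in>{1..n}. x tau k j) - real n * zs j) / (sqrt (real n) * sd j))\<^sup>2)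
      \<le> real n * Rsq n d (mstar d mu sd zs) \<gamma>"
proof -
  define N where "N = (\<lambda>j. (\<Sum>k=1..n. x tau k j) / real n - mu j)"
  define a where "a = (\<lambda>j. zs j - mu j)"
  define A where "A = (\<Sum>j=1..d. (N j)^2 / (sd j)^2)"
  define B where "B = (\<Sum>j=1..d. N j * (zs j - mu j) / (sd j)^2)"
  define m where "m = mstar d mu sd zs"
  define L where "L = ln ((real n - 1) / real n)"
  have npos: "real n > 0" using n by simp
  have Y: "(((\<Sum>k\<in>{1..n}. x tau k j) - real n * zs j) / (sqrt (real n) * sd j))\<^sup>2
      = real n * ((N j)^2 / (sd j)^2 - 2 * (N j * (zs j - mu j) / (sd j)^2) + (zs j - mu j)^2 / (sd j)^2)"
    if j: "j \<in> {1..d}" for j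
  proof -
    have sdj: "sd j \<noteq> 0" using sd[OF j] by simp
    have S: "(\<Sum>k\<in>{1..n}. x tau k j) = real n * (N j + mu j)"
      unfolding N_def using npos by simp
    have "(((\<Sum>k\<in>{1..n}. x tau k j) - real n * zs j) / (sqrt (real n) * sd j))\<^sup>2
        = (real n * (N j - (zs j - mu j)))\<^sup>2 / (real n * (sd j)\<^sup>2)"
      unfolding S using npos by (simp add: power_divide power_mult_distrib algebra_simps)
    also have "\<dots> = real n * ((N j - (zs j - mu j))\<^sup>2 / (sd j)\<^sup>2)"
      using npos sdj by (simp add: power_mult_distrib power2_eq_square)
    also have "\<dots> = real n * ((N j)^2 / (sd j)^2 - 2 * (N j * (zs j - mu j) / (sd j)^2) + (zs j - mu j)^2 / (sd j)^2)"
      by (simp add: power2_diff diff_divide_distrib add_divide_distrib)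
    finally show ?thesis .
  qed
  have sumY: "(\<Sum>j\<in>{1..d}. (((\<Sum>k\<in>{1..n}. x tau k j) - real n * zs j) / (sqrt (real n) * sd j))\<^sup>2)
      = real n * (A - 2 * B + m)"
  proof -
    have "(\<Sum>j\<in>{1..d}. (((\<Sum>k\<in>{1..n}. x tau k j) - real n * zs j) / (sqrt (real n) * sd j))\<^sup>2)
       = (\<Sum>j\<in>{1..d}. real n * ((N j)^2 / (sd j)^2 - 2 * (N j * (zs j - mu j) / (sd j)^2) + (zs j - mu j)^2 / (sd j)^2))"
      by (rule sum.cong) (auto simp only: Y)
    also have "\<dots> = real n * (\<Sum>j\<in>{1..d}. ((N j)^2 / (sd j)^2 - 2 * (N j * (zs j - mu j) / (sd j)^2) + (zs j - mu j)^2 / (sd j)^2))"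
      by (rule sum_distrib_left[symmetric])
    also have "(\<Sum>j\<in>{1..d}. ((N j)^2 / (sd j)^2 - 2 * (N j * (zs j - mu j) / (sd j)^2) + (zs j - mu j)^2 / (sd j)^2))
       = A - 2 * B + m"
      unfolding A_def B_def m_def mstar_def
      by (simp only: sum.distrib sum_subtractf sum_distrib_left[symmetric])
    finally show ?thesis .
  qed
  have llr: "logLR n d mu sd zs x tau
      = - real d / 2 * L - (real n - 1 + 1) / (2 * (real n - 1)) * A + (real n - 1 + 1) / (real n - 1) * B - m / (2 * (real n - 1))"
    unfolding logLR_def Let_def A_def B_def m_def mstar_def N_def L_def by simp
  have rs: "real n * Rsq n d m \<gamma> = (real n - 1 + 1) * (2 * (real n - 1) / (real n - 1 + 1) * (m / 2 - \<gamma> - real d / 2 * L))"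
    unfolding Rsq_def L_def by simp
  have "\<gamma> \<le> logLR n d mu sd zs x tau \<longleftrightarrow> (real n - 1 + 1) * (A - 2 * B + m) \<le> real n * Rsq n d m \<gamma>"
    unfolding llr rs by (rule llr_alg) (use n in simp)
  then show ?thesis unfolding sumY m_def by simp
qed



theorem corollaryB6:
  fixes M :: "'a measure" and X :: "nat \<Rightarrow> nat \<Rightarrow> nat \<Rightarrow> 'a \<Rightarrow> real"
    and T n d tau :: nat and mu sd zs :: "nat \<Rightarrow> real" and \<gamma> :: real
  assumes "prob_space M"
    and "T \<ge> 1" and "n \<ge> 2" and "d \<ge> 1" and "tau \<in> {1..T}"
    and "\<And>j. j \<in> {1..d} \<Longrightarrow> sd j > 0"
    and "prob_space.indep_vars M (\<lambda>_. borel) (\<lambda>(t, k, j). X t k j) ({1..T} \<times> {1..n} \<times> {1..d})"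
    and "\<And>t k j. t \<in> {1..T} \<Longrightarrow> k \<in> {1..n} \<Longrightarrow> j \<in> {1..d} \<Longrightarrow>
           distributed M lborel (X t k j) (normal_density (mu j) (sd j))"
    and "\<gamma> \<le> gamma_max n d (mstar d mu sd zs)"
  shows "measure M {\<omega> \<in> space M. logLR n d mu sd zs (\<lambda>t k j. X t k j \<omega>) tau \<ge> \<gamma>}
         = nc_chi2_cdf d (real n * mstar d mu sd zs)
             (real n * Rsq n d (mstar d mu sd zs) \<gamma>)"
proof -
  interpret prob_space M by fact
  note n = assms(3) and tauT = assms(5) and sdpos = assms(6) and Xdist = assms(8)
  define Xf where "Xf = (\<lambda>(t, k, j). X t k j)"
  have ind: "indep_vars (\<lambda>_. borel) Xf ({1..T} \<times> {1..n} \<times> {1..d})"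
    using assms(7) unfolding Xf_def .
  define S where "S = (\<lambda>j \<omega>. \<Sum>k\<in>{1..n}. X tau k j \<omega>)"
  define Y where "Y = (\<lambda>j \<omega>. (S j \<omega> - real n * zs j) / (sqrt (real n) * sd j))"
  define c where "c = (\<lambda>j. (real n * mu j - real n * zs j) / (sqrt (real n) * sd j))"
  have npos: "real n > 0" using n by simp
  have indk: "indep_vars (\<lambda>_. borel) (\<lambda>k. X tau k j) {1..n}" if j: "j \<in> {1..d}" for j
  proof -
    have r1: "indep_vars (\<lambda>k. PiM {(tau, k, j)} (\<lambda>_. borel)) (\<lambda>k \<omega>. restrict (\<lambda>i. Xf i \<omega>) {(tau, k, j)}) {1..n}"
      by (rule indep_vars_restrict[OF ind]) (use tauT j in \<open>auto simp: disjoint_family_on_def\<close>)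
    have r2: "indep_vars (\<lambda>_. borel) (\<lambda>k \<omega>. (\<lambda>g. g (tau, k, j)) (restrict (\<lambda>i. Xf i \<omega>) {(tau, k, j)})) {1..n}"
      by (rule indep_vars_compose2[OF r1]) (rule measurable_component_singleton, simp)
    show ?thesis
      by (rule indep_vars_cong[THEN iffD1, OF refl _ _ r2]) (auto simp: Xf_def)
  qed
  have Sdist: "distributed M lborel (S j) (normal_density (real n * mu j) (sqrt (real n) * sd j))"
    if j: "j \<in> {1..d}" for j
  proof -
    have "distributed M lborel (\<lambda>\<omega>. \<Sum>k\<in>{1..n}. X tau k j \<omega>)
        (normal_density (\<Sum>k\<in>{1..n}. mu j) (sqrt (\<Sum>k\<in>{1..n}. (sd j)\<^sup>2)))"
      by (rule sum_indep_normal[OF _ _ indk[OF j]]) (use n sdpos[OF j] Xdist[OF tauT _ j] in auto)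
    moreover have "sqrt (\<Sum>k\<in>{1..n}. (sd j)\<^sup>2) = sqrt (real n) * sd j"
      using sdpos[OF j] by (simp add: real_sqrt_mult)
    ultimately show ?thesis by (simp add: S_def)
  qed
  have Ydist: "distributed M lborel (Y j) (normal_density (c j) 1)" if j: "j \<in> {1..d}" for j
  proof -
    have sj: "sqrt (real n) * sd j > 0" using npos sdpos[OF j] by simp
    have "distributed M lborel (\<lambda>\<omega>. - (real n * zs j) / (sqrt (real n) * sd j) + (1 / (sqrt (real n) * sd j)) * S j \<omega>)
       (normal_density (- (real n * zs j) / (sqrt (real n) * sd j) + (1 / (sqrt (real n) * sd j)) * (real n * mu j))
                       (\<bar>1 / (sqrt (real n) * sd j)\<bar> * (sqrt (real n) * sd j)))"
      by (rule normal_density_affine[OF Sdist[OF j] sj]) (use npos sdpos[OF j] in simp)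
    moreover have "(\<lambda>\<omega>. - (real n * zs j) / (sqrt (real n) * sd j) + (1 / (sqrt (real n) * sd j)) * S j \<omega>) = Y j"
      unfolding Y_def by (rule ext) (simp add: diff_divide_distrib)
    moreover have "- (real n * zs j) / (sqrt (real n) * sd j) + (1 / (sqrt (real n) * sd j)) * (real n * mu j) = c j"
      unfolding c_def by (simp add: diff_divide_distrib)
    moreover have "\<bar>1 / (sqrt (real n) * sd j)\<bar> * (sqrt (real n) * sd j) = 1"
      using npos sdpos[OF j] by simp
    ultimately show ?thesis by simp
  qed
  define K where "K = (\<lambda>j::nat. {tau} \<times> {1..n} \<times> {j})"
  define h where "h = (\<lambda>j (g :: nat \<times> nat \<times> nat \<Rightarrow> real). ((\<Sum>k\<in>{1..n}. g (tau, k, j)) - real n * zs j) / (sqrt (real n) * sd j))"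
  have indY: "indep_vars (\<lambda>_. borel) Y {1..d}"
  proof -
    have r1: "indep_vars (\<lambda>j. PiM (K j) (\<lambda>_. borel)) (\<lambda>j \<omega>. restrict (\<lambda>i. Xf i \<omega>) (K j)) {1..d}"
      by (rule indep_vars_restrict[OF ind]) (use tauT in \<open>auto simp: disjoint_family_on_def K_def\<close>)
    have hm: "h j \<in> borel_measurable (PiM (K j) (\<lambda>_. borel))" for j
    proof -
      have "(\<lambda>g :: nat \<times> nat \<times> nat \<Rightarrow> real. \<Sum>k\<in>{1..n}. g (tau, k, j)) \<in> borel_measurable (PiM (K j) (\<lambda>_. borel))"
      proof (rule borel_measurable_sum)
        fix k assume "k \<in> {1..n}"
        then show "(\<lambda>g :: nat \<times> nat \<times> nat \<Rightarrow> real. g (tau, k, j)) \<in> borel_measurable (PiM (K j) (\<lambda>_. borel))"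
          using measurable_component_singleton[of "(tau, k, j)" "K j" "\<lambda>_. borel"] by (simp add: K_def)
      qed
      then show ?thesis unfolding h_def by measurable
    qed
    have r2: "indep_vars (\<lambda>_. borel) (\<lambda>j \<omega>. h j (restrict (\<lambda>i. Xf i \<omega>) (K j))) {1..d}"
      by (rule indep_vars_compose2[OF r1 hm])
    show ?thesis
    proof (rule indep_vars_cong[THEN iffD1, OF refl _ _ r2])
      fix j assume "j \<in> {1..d}"
      show "(\<lambda>\<omega>. h j (restrict (\<lambda>i. Xf i \<omega>) (K j))) = Y j"
        by (rule ext) (auto simp: h_def Y_def S_def K_def Xf_def intro!: sum.cong)
    qed simp
  qed
  define Z where "Z = (\<lambda>\<omega>. \<Sum>j\<in>{1..d}. (Y j \<omega>)\<^sup>2)"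
  have csum: "(\<Sum>j\<in>{1..d}. (c j)\<^sup>2) = real n * mstar d mu sd zs"
  proof -
    have "(c j)\<^sup>2 = real n * ((zs j - mu j)^2 / (sd j)^2)" if j: "j \<in> {1..d}" for j
    proof -
      have "(c j)\<^sup>2 = (real n * (mu j - zs j))\<^sup>2 / (real n * (sd j)\<^sup>2)"
        unfolding c_def using npos by (simp add: power_divide power_mult_distrib algebra_simps)
      also have "\<dots> = real n * ((mu j - zs j)\<^sup>2 / (sd j)\<^sup>2)"
        using npos sdpos[OF j] by (simp add: power_mult_distrib power2_eq_square)
      also have "\<dots> = real n * ((zs j - mu j)^2 / (sd j)^2)"
        by (simp add: power2_commute)
      finally show ?thesis .
    qed
    then have "(\<Sum>j\<in>{1..d}. (c j)\<^sup>2) = (\<Sum>j\<in>{1..d}. real n * ((zs j - mu j)^2 / (sd j)^2))"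
      by (intro sum.cong) auto
    then show ?thesis unfolding mstar_def by (simp add: sum_distrib_left)
  qed
  have Zdist: "distributed M lborel Z (\<lambda>x. ennreal (nc_chi2_density d (real n * mstar d mu sd zs) x))"
    using sum_sq_normal[of "{1..d}" Y c] indY Ydist assms(4) unfolding Z_def csum by simp
  define t where "t = real n * Rsq n d (mstar d mu sd zs) \<gamma>"
  have ev: "{\<omega> \<in> space M. logLR n d mu sd zs (\<lambda>t k j. X t k j \<omega>) tau \<ge> \<gamma>} = Z -` {..t} \<inter> space M"
  proof -
    have "logLR n d mu sd zs (\<lambda>t k j. X t k j \<omega>) tau \<ge> \<gamma> \<longleftrightarrow> Z \<omega> \<le> t" for \<omega>
      unfolding Z_def Y_def S_def t_def by (rule logLR_equiv[OF n sdpos])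
    then show ?thesis by auto
  qed
  let ?f = "\<lambda>x. indicator {..t} x * nc_chi2_density d (real n * mstar d mu sd zs) x"
  have ms: "mstar d mu sd zs \<ge> 0" unfolding mstar_def by (intro sum_nonneg) auto
  have fnn: "?f x \<ge> 0" for x
    using nc_nonneg[of d "real n * mstar d mu sd zs" x] assms(4) ms npos by (simp add: indicator_def)
  have em: "emeasure M (Z -` {..t} \<inter> space M) = (\<integral>\<^sup>+x. ennreal (?f x) \<partial>lborel)"
  proof -
    have "emeasure M (Z -` {..t} \<inter> space M) = (\<integral>\<^sup>+x. ennreal (nc_chi2_density d (real n * mstar d mu sd zs) x) * indicator {..t} x \<partial>lborel)"
      by (rule distributed_emeasure[OF Zdist]) simp
    also have "\<dots> = (\<integral>\<^sup>+x. ennreal (?f x) \<partial>lborel)"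
      by (intro nn_integral_cong) (simp add: indicator_def)
    finally show ?thesis .
  qed
  have integ: "integrable lborel ?f"
  proof (rule integrableI_nonneg)
    show "?f \<in> borel_measurable lborel" by measurable
    show "AE x in lborel. 0 \<le> ?f x" using fnn by simp
    have "(\<integral>\<^sup>+x. ennreal (?f x) \<partial>lborel) = emeasure M (Z -` {..t} \<inter> space M)" using em by simp
    also have "\<dots> < \<infinity>" by (simp add: less_top[symmetric])
    finally show "(\<integral>\<^sup>+x. ennreal (?f x) \<partial>lborel) < \<infinity>" .
  qed
  have "measure M (Z -` {..t} \<inter> space M) = enn2real (emeasure M (Z -` {..t} \<inter> space M))"
    by (simp add: measure_def)
  also have "\<dots> = enn2real (ennreal (integral\<^sup>L lborel ?f))"
    unfolding em by (subst nn_integral_eq_integral[OF integ]) (use fnn in auto)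
  also have "\<dots> = integral\<^sup>L lborel ?f"
    using fnn by (simp add: integral_nonneg_AE)
  also have "\<dots> = nc_chi2_cdf d (real n * mstar d mu sd zs) t"
    unfolding nc_chi2_cdf_def ..
  finally show ?thesis unfolding ev t_def .
qed

end
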